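(* Let $\mathcal{R}=(G_0,e\to R)$ be an expanding replacement system. Then its limit space $X=\Omega/\sim$ is a compact metrizable space.
   Context: A graph means a finite directed multigraph (loops, multiple edges allowed). A replacement system $\mathcal{R}=(G_0,e\to R)$: $G_0$ a graph, $e$ a non-loop directed edge from $v$ to $w$, $R$ a graph containing $v,w$ (initial and terminal vertices of $R$). Replacing an edge $\varepsilon$ of a graph means deleting it and gluing in a copy of $R$ with its initial/terminal vertices identified with the initial/terminal vertices of $\varepsilon$; new edges are named $\varepsilon\zeta$ ($\zeta\in E(R)$). The full expansion $G_n$ is obtained from $G_{n-1}$ by replacing every edge; edges of $G_n$ are words $\varepsilon_0\cdots\varepsilon_n$ with $\varepsilon_0\in E(G_0)$, $\varepsilon_i\in E(R)$. $\mathcal{R}$ is expanding if neither $G_0$ nor $R$ has isolated vertices, the initial and terminal vertices of $R$ are not joined by an edge, and $R$ has at least three vertices and two edges. The symbol space $\Omega=E(G_0)\times E(R)^{\mathbb{N}}$ has the product topology; $\varepsilon_0\varepsilon_1\cdots\sim\varepsilon_0'\varepsilon_1'\cdots$ iff for every $n$ the edges $\varepsilon_0\cdots\varepsilon_n$ and $\varepsilon_0'\cdots\varepsilon_n'$ of $G_n$ share at least one vertex (for expanding systems this is an equivalence relation), and $X=\Omega/\sim$ carries the quotient topology. *)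

theory Defs
  imports "HOL-Analysis.Analysis" "Graph_Theory.Digraph"
begin

text \<open>Graphs are finite directed multigraphs (loops and multiple arcs allowed), i.e.
  Graph_Theory pre_digraphs satisfying fin_digraph.\<close>

definition no_isolated_vertices :: "('a,'b) pre_digraph \<Rightarrow> bool" where
  "no_isolated_vertices G \<longleftrightarrow>
     (\<forall>x\<in>verts G. \<exists>a\<in>arcs G. tail G a = x \<or> head G a = x)"

text \<open>A replacement system (G0, e -> R): G0 a graph, R a graph with distinct initial
  vertex i and terminal vertex t (the endpoints of the non-loop edge e).\<close>
definition replacement_system ::
  "('v,'e) pre_digraph \<Rightarrow> ('w,'f) pre_digraph \<Rightarrow> 'w \<Rightarrow> 'w \<Rightarrow> bool" where
  "replacement_system G0 R i t \<longleftrightarrow>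
     fin_digraph G0 \<and> fin_digraph R \<and> i \<in> verts R \<and> t \<in> verts R \<and> i \<noteq> t"

definition expanding ::
  "('v,'e) pre_digraph \<Rightarrow> ('w,'f) pre_digraph \<Rightarrow> 'w \<Rightarrow> 'w \<Rightarrow> bool" where
  "expanding G0 R i t \<longleftrightarrow>
     replacement_system G0 R i t \<and>
     no_isolated_vertices G0 \<and> no_isolated_vertices R \<and>
     (\<forall>a\<in>arcs R. \<not> ((tail R a = i \<and> head R a = t) \<or> (tail R a = t \<and> head R a = i))) \<and>
     card (verts R) \<ge> 3 \<and> card (arcs R) \<ge> 2"

text \<open>Vertices of the full expansion G_n: vertices of G0, or a new vertex
  (p, x) created when the edge p (a word e0 e1 ... ek) is replaced, x an interior
  vertex of R (x different from i, t).\<close>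
datatype ('v,'e,'w,'f) xvert = Base 'v | New "'e \<times> 'f list" 'w

text \<open>Endpoints (tail, head) of the edge e0 e1 ... en of G_n; the list argument is the
  reversed word e_n ... e_1.\<close>
fun ends_rev ::
  "('v,'e) pre_digraph \<Rightarrow> ('w,'f) pre_digraph \<Rightarrow> 'w \<Rightarrow> 'w \<Rightarrow> 'e \<Rightarrow> 'f list
     \<Rightarrow> ('v,'e,'w,'f) xvert \<times> ('v,'e,'w,'f) xvert" where
  "ends_rev G0 R i t e0 [] = (Base (tail G0 e0), Base (head G0 e0))"
| "ends_rev G0 R i t e0 (z # rs) =
     (let p = ends_rev G0 R i t e0 rs;
          f = (\<lambda>x. if x = i then fst p else if x = t then snd p else New (e0, rev rs) x)
      in (f (tail R z), f (head R z)))"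

definition edge_vertices ::
  "('v,'e) pre_digraph \<Rightarrow> ('w,'f) pre_digraph \<Rightarrow> 'w \<Rightarrow> 'w \<Rightarrow> 'e \<Rightarrow> 'f list
     \<Rightarrow> ('v,'e,'w,'f) xvert set" where
  "edge_vertices G0 R i t e0 ws =
     (let p = ends_rev G0 R i t e0 (rev ws) in {fst p, snd p})"

definition symbol_space :: "('v,'e) pre_digraph \<Rightarrow> ('w,'f) pre_digraph \<Rightarrow> ('e \<times> (nat \<Rightarrow> 'f)) topology" where
  "symbol_space G0 R =
     prod_topology (discrete_topology (arcs G0))
                   (product_topology (\<lambda>_. discrete_topology (arcs R)) UNIV)"

definition gluing_rel ::
  "('v,'e) pre_digraph \<Rightarrow> ('w,'f) pre_digraph \<Rightarrow> 'w \<Rightarrow> 'w \<Rightarrow> (('e \<times> (nat \<Rightarrow> 'f)) \<times> ('e \<times> (nat \<Rightarrow> 'f))) set" where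
  "gluing_rel G0 R i t =
     {(a, b). a \<in> topspace (symbol_space G0 R) \<and> b \<in> topspace (symbol_space G0 R) \<and>
        (\<forall>n. edge_vertices G0 R i t (fst a) (map (snd a) [0..<n]) \<inter>
             edge_vertices G0 R i t (fst b) (map (snd b) [0..<n]) \<noteq> {})}"

definition quotient_topology :: "'a topology \<Rightarrow> ('a \<times> 'a) set \<Rightarrow> 'a set topology" where
  "quotient_topology X r =
     topology (\<lambda>U. U \<subseteq> topspace X // r \<and> openin X {x \<in> topspace X. r `` {x} \<in> U})"

definition limit_space ::
  "('v,'e) pre_digraph \<Rightarrow> ('w,'f) pre_digraph \<Rightarrow> 'w \<Rightarrow> 'w \<Rightarrow> ('e \<times> (nat \<Rightarrow> 'f)) set topology" where
  "limit_space G0 R i t = quotient_topology (symbol_space G0 R) (gluing_rel G0 R i t)"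

end

theory Submission
  imports Defs
begin

lemma qt_istopology:
  "istopology (\<lambda>U. U \<subseteq> topspace X // r \<and> openin X {x \<in> topspace X. r `` {x} \<in> U})"
proof -
  define L where "L = (\<lambda>U. U \<subseteq> topspace X // r \<and> openin X {x \<in> topspace X. r `` {x} \<in> U})"
  have A: "L (S \<inter> T)" if S: "L S" and T: "L T" for S T
  proof -
    have "{x \<in> topspace X. r `` {x} \<in> S \<inter> T} = {x \<in> topspace X. r `` {x} \<in> S} \<inter> {x \<in> topspace X. r `` {x} \<in> T}"
      by blast
    then show ?thesis
      using S T by (auto simp: L_def)
  qed
  have B: "L (\<Union>K)" if K: "\<forall>S\<in>K. L S" for K
  proof -
    have "{x \<in> topspace X. r `` {x} \<in> \<Union>K} = \<Union>((\<lambda>S. {x \<in> topspace X. r `` {x} \<in> S}) ` K)"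
      by blast
    moreover have "openin X (\<Union>((\<lambda>S. {x \<in> topspace X. r `` {x} \<in> S}) ` K))"
      using K by (intro openin_Union) (auto simp: L_def)
    ultimately show ?thesis
      using K by (auto simp: L_def)
  qed
  have "istopology L"
    unfolding istopology_def using A B by blast
  then show ?thesis by (simp add: L_def)
qed

lemma qt_openin:
  "openin (quotient_topology X r) U \<longleftrightarrow> U \<subseteq> topspace X // r \<and> openin X {x \<in> topspace X. r `` {x} \<in> U}"
  unfolding quotient_topology_def using qt_istopology[of X r] by simp

lemma qt_topspace: "topspace (quotient_topology X r) = topspace X // r"
proof -
  have "{x \<in> topspace X. r `` {x} \<in> topspace X // r} = topspace X"
    by (auto intro: quotientI)
  then have "openin (quotient_topology X r) (topspace X // r)"
    by (simp add: qt_openin)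
  then have "topspace X // r \<subseteq> topspace (quotient_topology X r)"
    by (simp add: openin_subset)
  moreover have "topspace (quotient_topology X r) \<subseteq> topspace X // r"
    by (metis openin_topspace qt_openin)
  ultimately show ?thesis by blast
qed

lemma qt_continuous: "continuous_map X (quotient_topology X r) (\<lambda>x. r `` {x})"
  unfolding continuous_map_def qt_topspace
  by (auto intro: quotientI simp: qt_openin)

lemma qt_closedin:
  "closedin (quotient_topology X r) K \<longleftrightarrow> K \<subseteq> topspace X // r \<and> closedin X {x \<in> topspace X. r `` {x} \<in> K}"
proof -
  have e: "{x \<in> topspace X. r `` {x} \<in> topspace X // r - K} = topspace X - {x \<in> topspace X. r `` {x} \<in> K}"
    by (auto intro: quotientI)
  show ?thesis
    unfolding closedin_def qt_topspace qt_openin e by auto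
qed

lemma quotient_compact_metrizable:
  fixes X :: "'a topology" and \<B> :: "'a set set"
  assumes cX: "compact_space X" and hX: "Hausdorff_space X"
    and Bc: "countable \<B>" and Bo: "\<And>V. V \<in> \<B> \<Longrightarrow> openin X V"
    and Bb: "\<And>W x. openin X W \<Longrightarrow> x \<in> W \<Longrightarrow> \<exists>V\<in>\<B>. x \<in> V \<and> V \<subseteq> W"
    and eq: "equiv (topspace X) r"
    and cl: "closedin (prod_topology X X) r"
  shows "compact_space (quotient_topology X r) \<and> metrizable_space (quotient_topology X r)"
proof -
  define Y where "Y = quotient_topology X r"
  define p where "p = (\<lambda>x. r `` {x})"
  define T where "T = topspace X"
  have rsub: "r \<subseteq> T \<times> T" using eq by (simp add: T_def equiv_type)
  have topY: "topspace Y = T // r" by (simp add: Y_def T_def qt_topspace)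
  have contp: "continuous_map X Y p" unfolding Y_def p_def by (rule qt_continuous)
  have surj: "p ` T = topspace Y"
    by (auto simp: topY p_def quotient_def)
  have peq: "p x = p y \<longleftrightarrow> (x, y) \<in> r" if "x \<in> T" "y \<in> T" for x y
    using eq_equiv_class_iff[OF eq] that by (simp add: p_def T_def)
  have cY: "compact_space Y"
    using image_compactin[OF _ contp, of T] cX surj by (simp add: compact_space_def T_def)
  have satcl: "closedin X {x \<in> T. \<exists>k\<in>K. p x = p k}" if K: "closedin X K" for K
  proof -
    have KT: "K \<subseteq> T" using K closedin_subset T_def by blast
    have "{x \<in> T. \<exists>k\<in>K. p x = p k} = snd ` (r \<inter> (K \<times> T))"
    proof (intro set_eqI iffI)
      fix x assume "x \<in> {x \<in> T. \<exists>k\<in>K. p x = p k}"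
      then obtain k where "x \<in> T" "k \<in> K" "p x = p k" by blast
      then have "(k, x) \<in> r" using peq KT by (metis subsetD)
      then show "x \<in> snd ` (r \<inter> (K \<times> T))" using \<open>k \<in> K\<close> \<open>x \<in> T\<close> by force
    next
      fix x assume "x \<in> snd ` (r \<inter> (K \<times> T))"
      then obtain k where "(k, x) \<in> r" "k \<in> K" "x \<in> T" by auto
      then show "x \<in> {x \<in> T. \<exists>k\<in>K. p x = p k}" using peq KT by (metis (mono_tags, lifting) mem_Collect_eq subsetD)
    qed
    moreover have "closedin (prod_topology X X) (r \<inter> (K \<times> T))"
      using cl K by (intro closedin_Int) (auto simp: closedin_prod_Times_iff T_def)
    ultimately show ?thesis
      using closed_map_snd[OF cX, of X] unfolding closed_map_def by metis
  qed
  have clmap: "closed_map X Y p"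
    unfolding closed_map_def
  proof (intro allI impI)
    fix K assume K: "closedin X K"
    have KT: "K \<subseteq> T" using K closedin_subset T_def by blast
    have "{x \<in> topspace X. r `` {x} \<in> p ` K} = {x \<in> T. \<exists>k\<in>K. p x = p k}"
      by (auto simp: p_def T_def)
    moreover have "p ` K \<subseteq> topspace X // r"
      using KT by (auto simp: p_def T_def intro: quotientI)
    ultimately show "closedin Y (p ` K)"
      unfolding Y_def qt_closedin using satcl[OF K] by simp
  qed
  have t1Y: "t1_space Y"
    unfolding t1_space_closedin_singleton
  proof
    fix y assume "y \<in> topspace Y"
    then obtain a where a: "a \<in> T" "y = p a" using surj by (metis imageE)
    have "closedin X {a}" using a hX closedin_Hausdorff_singleton T_def by metis
    then have "closedin Y (p ` {a})" using clmap closed_map_def by blast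
    then show "closedin Y {y}" using a by simp
  qed
  have nX: "normal_space X" using cX hX compact_Hausdorff_or_regular_imp_normal_space by blast
  have hY: "Hausdorff_space Y"
    using Hausdorff_normal_space_closed_continuous_map_image[OF nX clmap contp] surj t1Y T_def by blast
  have nY: "normal_space Y"
    using normal_space_continuous_closed_map_image[OF nX contp clmap] surj T_def by blast
  have rY: "regular_space Y" using cY hY compact_Hausdorff_imp_regular_space by blast
  define F where "F = {A. finite A \<and> A \<subseteq> \<B>}"
  have Fc: "countable F" unfolding F_def using Bc by (rule countable_Collect_finite_subset)
  define V where "V = (\<lambda>A. topspace Y - p ` (T - \<Union>A))"
  have Vo: "openin Y (V A)" if "A \<in> F" for A
  proof -
    have "openin X (\<Union>A)" using that Bo by (auto simp: F_def)
    then have "closedin X (T - \<Union>A)" by (simp add: T_def closedin_diff)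
    then have "closedin Y (p ` (T - \<Union>A))" using clmap closed_map_def by blast
    then show ?thesis unfolding V_def by (intro openin_diff) auto
  qed
  have Vb: "\<exists>A\<in>F. y \<in> V A \<and> V A \<subseteq> W" if W: "openin Y W" and y: "y \<in> W" for W y
  proof -
    have "y \<in> topspace Y" using W y openin_subset by blast
    then obtain a where a: "a \<in> T" "y = p a" using surj by (metis imageE)
    define C where "C = {x \<in> T. p x \<in> {y}}"
    have "closedin Y {y}" using t1Y \<open>y \<in> topspace Y\<close> by (simp add: t1_space_closedin_singleton)
    then have "closedin X C" unfolding C_def T_def by (rule closedin_continuous_map_preimage[OF contp])
    then have Cc: "compactin X C" using cX closedin_compact_space by blast
    define Ow where "Ow = {x \<in> T. p x \<in> W}"
    have Oo: "openin X Ow" unfolding Ow_def T_def by (rule openin_continuous_map_preimage[OF contp W])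
    have CO: "C \<subseteq> Ow" using y by (auto simp: C_def Ow_def)
    have "C \<subseteq> \<Union>{U\<in>\<B>. U \<subseteq> Ow}"
    proof
      fix x assume "x \<in> C"
      then have "x \<in> Ow" using CO by blast
      then obtain U where "U \<in> \<B>" "x \<in> U" "U \<subseteq> Ow" using Bb[OF Oo] by blast
      then show "x \<in> \<Union>{U\<in>\<B>. U \<subseteq> Ow}" by blast
    qed
    then obtain A where A: "finite A" "A \<subseteq> {U\<in>\<B>. U \<subseteq> Ow}" "C \<subseteq> \<Union>A"
      using Cc unfolding compactin_def
      by (metis (no_types, lifting) Bo mem_Collect_eq)
    have AF: "A \<in> F" using A by (auto simp: F_def)
    have "y \<in> V A"
    proof -
      have "y \<notin> p ` (T - \<Union>A)"
      proof
        assume "y \<in> p ` (T - \<Union>A)"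
        then obtain x where "x \<in> T" "x \<notin> \<Union>A" "p x = y" by blast
        then have "x \<in> C" by (simp add: C_def)
        then show False using A \<open>x \<notin> \<Union>A\<close> by blast
      qed
      then show ?thesis using \<open>y \<in> topspace Y\<close> by (simp add: V_def)
    qed
    moreover have "V A \<subseteq> W"
    proof
      fix y' assume y': "y' \<in> V A"
      then have "y' \<in> topspace Y" by (simp add: V_def)
      then obtain x where x: "x \<in> T" "y' = p x" using surj by (metis imageE)
      have "x \<in> \<Union>A" using y' x by (auto simp: V_def)
      then have "x \<in> Ow" using A by blast
      then show "y' \<in> W" using x by (simp add: Ow_def)
    qed
    ultimately show ?thesis using AF by blast
  qed
  define I where "I = F \<times> F"
  have Ic: "countable I" unfolding I_def using Fc by blast
  have "\<forall>q. \<exists>f. continuous_map Y (top_of_set {0..1::real}) f \<and>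
          (q \<in> I \<and> Y closure_of V (fst q) \<subseteq> V (snd q) \<longrightarrow>
             f ` (Y closure_of V (fst q)) \<subseteq> {0} \<and> f ` (topspace Y - V (snd q)) \<subseteq> {1})"
  proof
    fix q :: "'a set set \<times> 'a set set"
    show "\<exists>f. continuous_map Y (top_of_set {0..1::real}) f \<and>
          (q \<in> I \<and> Y closure_of V (fst q) \<subseteq> V (snd q) \<longrightarrow>
             f ` (Y closure_of V (fst q)) \<subseteq> {0} \<and> f ` (topspace Y - V (snd q)) \<subseteq> {1})"
    proof (cases "q \<in> I \<and> Y closure_of V (fst q) \<subseteq> V (snd q)")
      case True
      have "snd q \<in> F" using True by (auto simp: I_def)
      then have "closedin Y (topspace Y - V (snd q))" using Vo by (intro closedin_diff) auto
      moreover have "disjnt (Y closure_of V (fst q)) (topspace Y - V (snd q))"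
        using True by (auto simp: disjnt_def)
      ultimately obtain f where "continuous_map Y (top_of_set {0..1::real}) f"
          "f ` (Y closure_of V (fst q)) \<subseteq> {0}" "f ` (topspace Y - V (snd q)) \<subseteq> {1}"
        using Urysohn_lemma[where X=Y and S="Y closure_of V (fst q)" and T="topspace Y - V (snd q)" and a=0 and b=1, OF nY closedin_closure_of] by auto
      then show ?thesis by blast
    next
      case False
      have "continuous_map Y (top_of_set {0..1::real}) (\<lambda>_. 0)" by simp
      then show ?thesis using False by blast
    qed
  qed
  then obtain g where g: "\<And>q. continuous_map Y (top_of_set {0..1::real}) (g q)"
     "\<And>q. q \<in> I \<Longrightarrow> Y closure_of V (fst q) \<subseteq> V (snd q) \<Longrightarrow>
             g q ` (Y closure_of V (fst q)) \<subseteq> {0} \<and> g q ` (topspace Y - V (snd q)) \<subseteq> {1}"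
    by metis
  define P where "P = product_topology (\<lambda>_. top_of_set {0..1::real}) I"
  define \<Phi> where "\<Phi> = (\<lambda>y. restrict (\<lambda>q. g q y) I)"
  have contPhi: "continuous_map Y P \<Phi>"
    unfolding P_def \<Phi>_def continuous_map_componentwise using g(1) by auto
  have hP: "Hausdorff_space P"
    unfolding P_def Hausdorff_space_product_topology
    by (simp add: Hausdorff_space_subtopology)
  have injPhi: "inj_on \<Phi> (topspace Y)"
  proof (rule inj_onI, rule ccontr)
    fix y1 y2 assume y1: "y1 \<in> topspace Y" and y2: "y2 \<in> topspace Y" and e: "\<Phi> y1 = \<Phi> y2" and ne: "y1 \<noteq> y2"
    have "closedin Y {y2}" using t1Y y2 by (simp add: t1_space_closedin_singleton)
    then have "openin Y (topspace Y - {y2})" by (meson closedin_def)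
    then obtain A2 where A2: "A2 \<in> F" "y1 \<in> V A2" "V A2 \<subseteq> topspace Y - {y2}"
      using Vb y1 ne by blast
    have "closedin Y (topspace Y - V A2)" using Vo[OF A2(1)] by (intro closedin_diff) auto
    moreover have "y1 \<in> topspace Y - (topspace Y - V A2)" using A2 y1 by blast
    ultimately obtain U where U: "openin Y U" "y1 \<in> U" "disjnt (topspace Y - V A2) (Y closure_of U)"
      using rY unfolding regular_space by blast
    have cU: "Y closure_of U \<subseteq> V A2"
      using U(3) closure_of_subset_topspace[of Y U] by (auto simp: disjnt_def)
    obtain A1 where A1: "A1 \<in> F" "y1 \<in> V A1" "V A1 \<subseteq> U" using Vb[OF U(1) U(2)] by blast
    have cl1: "Y closure_of V A1 \<subseteq> V A2" using closure_of_mono[OF A1(3)] cU by blast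
    have q: "(A1, A2) \<in> I" using A1 A2 by (simp add: I_def)
    have "y1 \<in> Y closure_of V A1" using A1(2) closure_of_subset[of "V A1" Y] by (auto simp: V_def)
    then have "g (A1, A2) y1 = 0" using g(2)[OF q] cl1 by auto
    moreover have "g (A1, A2) y2 = 1"
    proof -
      have "y2 \<in> topspace Y - V A2" using A2 y2 by blast
      moreover have "g (A1, A2) ` (topspace Y - V A2) \<subseteq> {1}" using g(2)[OF q] cl1 by simp
      ultimately show ?thesis by blast
    qed
    moreover have "g (A1, A2) y1 = g (A1, A2) y2" using e q unfolding \<Phi>_def by (metis restrict_apply')
    ultimately show False by simp
  qed
  have emb: "embedding_map Y P \<Phi>"
    using continuous_imp_embedding_map[OF contPhi cY hP injPhi] .
  have mP: "metrizable_space P"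
    unfolding P_def
  proof (rule metrizable_topology_D)
    have "restrict (\<lambda>_. 0::real) I \<in> topspace (product_topology (\<lambda>_. top_of_set {0..1::real}) I)"
      by (simp add: topspace_product_topology)
    then show "topspace (product_topology (\<lambda>_. top_of_set {0..1::real}) I) \<noteq> {}" by blast
    show "countable {i \<in> I. \<nexists>a. topspace (top_of_set {0..1::real}) \<subseteq> {a}}"
      using Ic by (rule countable_subset[rotated]) auto
    show "\<And>i. i \<in> I \<Longrightarrow> metrizable_space (top_of_set {0..1::real})"
      by (simp add: metrizable_space_subtopology metrizable_space_euclidean)
  qed
  have "Y homeomorphic_space subtopology P (\<Phi> ` topspace Y)"
    using embedding_map_imp_homeomorphic_space[OF emb] .
  then have "metrizable_space Y"
    using homeomorphic_metrizable_space metrizable_space_subtopology[OF mP] by blast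
  then show ?thesis using cY by (simp add: Y_def)
qed



fun lvl :: "('v,'e,'w,'f) xvert \<Rightarrow> nat" where
  "lvl (Base v) = 0" | "lvl (New p x) = Suc (length (snd p))"

definition EVs where "EVs G0 R i t a n = edge_vertices G0 R i t (fst a) (map (snd a) [0..<n])"

lemma EVs_0: "EVs G0 R i t a 0 = {Base (tail G0 (fst a)), Base (head G0 (fst a))}"
  by (simp add: EVs_def edge_vertices_def)

lemma EVs_alt: "EVs G0 R i t a n =
   {fst (ends_rev G0 R i t (fst a) (rev (map (snd a) [0..<n]))), snd (ends_rev G0 R i t (fst a) (rev (map (snd a) [0..<n])))}"
  by (simp add: EVs_def edge_vertices_def Let_def)

lemma EVs_Suc: "EVs G0 R i t a (Suc n) =
  (let p = ends_rev G0 R i t (fst a) (rev (map (snd a) [0..<n]));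
       f = (\<lambda>x. if x = i then fst p else if x = t then snd p else New (fst a, map (snd a) [0..<n]) x)
   in {f (tail R (snd a n)), f (head R (snd a n))})"
  by (simp add: EVs_def edge_vertices_def Let_def)

lemma EVs_ne: "EVs G0 R i t a n \<noteq> {}"
  by (simp add: EVs_alt)

lemma EVs_Suc_cases:
  assumes "u \<in> EVs G0 R i t a (Suc n)"
  shows "u \<in> EVs G0 R i t a n \<or> (\<exists>x. u = New (fst a, map (snd a) [0..<n]) x)"
  using assms unfolding EVs_Suc Let_def EVs_alt[of G0 R i t a n]
  by (auto split: if_splits)

lemma lvl_EVs: "u \<in> EVs G0 R i t a n \<Longrightarrow> lvl u \<le> n"
proof (induction n arbitrary: u)
  case 0
  then show ?case by (auto simp: EVs_0)
next
  case (Suc n)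
  from EVs_Suc_cases[OF Suc.prems] show ?case
  proof
    assume "u \<in> EVs G0 R i t a n"
    then show ?thesis using Suc.IH by fastforce
  next
    assume "\<exists>x. u = New (fst a, map (snd a) [0..<n]) x"
    then show ?thesis by auto
  qed
qed

lemma EVs_content:
  "n \<le> m \<Longrightarrow> u \<in> EVs G0 R i t a m \<Longrightarrow>
     u \<in> EVs G0 R i t a n \<or> (\<exists>j x. n \<le> j \<and> j < m \<and> u = New (fst a, map (snd a) [0..<j]) x)"
proof (induction m arbitrary: u)
  case 0
  then show ?case by simp
next
  case (Suc m)
  show ?case
  proof (cases "n = Suc m")
    case True
    then show ?thesis using Suc.prems by simp
  next
    case False
    then have nm: "n \<le> m" using Suc.prems by simp
    from EVs_Suc_cases[OF Suc.prems(2)] show ?thesis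
    proof
      assume "u \<in> EVs G0 R i t a m"
      from Suc.IH[OF nm this] show ?thesis using less_SucI by blast
    next
      assume "\<exists>x. u = New (fst a, map (snd a) [0..<m]) x"
      then show ?thesis using nm by blast
    qed
  qed
qed

lemma EVs_cong:
  assumes "fst a = fst b" "\<And>k. k < n \<Longrightarrow> snd a k = snd b k"
  shows "EVs G0 R i t a n = EVs G0 R i t b n"
proof -
  have "map (snd a) [0..<n] = map (snd b) [0..<n]"
    by (intro map_cong) (auto simp: assms)
  then show ?thesis unfolding EVs_def using assms(1) by metis
qed

lemma New_eq_pre:
  assumes "New (e, map s [0..<j]) x = New (e', map s' [0..<j']) x'"
  shows "e = e' \<and> j = j' \<and> (\<forall>k<j. s k = s' k)"
proof -
  have m: "map s [0..<j] = map s' [0..<j']" and e: "e = e'" using assms by auto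
  have jj: "j = j'" using arg_cong[OF m, of length] by simp
  have "s k = s' k" if "k < j" for k
  proof -
    have "map s [0..<j] ! k = map s' [0..<j] ! k" using m jj by (simp only:)
    then show ?thesis using that by simp
  qed
  then show ?thesis using e jj by blast
qed

lemma EVs_mono:
  assumes "EVs G0 R i t a m \<inter> EVs G0 R i t b m \<noteq> {}" "n \<le> m"
  shows "EVs G0 R i t a n \<inter> EVs G0 R i t b n \<noteq> {}"
proof -
  obtain u where ua: "u \<in> EVs G0 R i t a m" and ub: "u \<in> EVs G0 R i t b m" using assms(1) by blast
  note ca = EVs_content[OF assms(2) ua] and cb = EVs_content[OF assms(2) ub]
  show ?thesis
  proof (cases "u \<in> EVs G0 R i t a n")
    case True
    show ?thesis
    proof (cases "u \<in> EVs G0 R i t b n")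
      case True
      then show ?thesis using \<open>u \<in> EVs G0 R i t a n\<close> by blast
    next
      case False
      then obtain j x where "n \<le> j" "u = New (fst b, map (snd b) [0..<j]) x" using cb by blast
      moreover have "lvl u \<le> n" by (rule lvl_EVs[OF True])
      ultimately show ?thesis by simp
    qed
  next
    case False
    then obtain j x where j: "n \<le> j" "u = New (fst a, map (snd a) [0..<j]) x" using ca by blast
    show ?thesis
    proof (cases "u \<in> EVs G0 R i t b n")
      case True
      have "lvl u \<le> n" by (rule lvl_EVs[OF True])
      then show ?thesis using j by simp
    next
      case False
      then obtain j' x' where j': "u = New (fst b, map (snd b) [0..<j']) x'" using cb by blast
      from New_eq_pre[of "fst a" "snd a" j x "fst b" "snd b" j' x'] j j'
      have "fst a = fst b" "\<forall>k<j. snd a k = snd b k" by auto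
      then have "EVs G0 R i t a n = EVs G0 R i t b n"
        using j(1) by (intro EVs_cong) auto
      then show ?thesis using EVs_ne by (metis inf.idem)
    qed
  qed
qed

lemma EVs_low_unique:
  assumes arcsR: "\<forall>z\<in>arcs R. \<not> ((tail R z = i \<and> head R z = t) \<or> (tail R z = t \<and> head R z = i))"
    and z: "snd a J \<in> arcs R" and Jm: "J < m"
    and u: "u \<in> EVs G0 R i t a m" and u': "u' \<in> EVs G0 R i t a m"
    and lu: "lvl u \<le> J" and lu': "lvl u' \<le> J"
  shows "u = u'"
proof -
  have SJ: "Suc J \<le> m" using Jm by simp
  have u1: "u \<in> EVs G0 R i t a (Suc J)"
    using EVs_content[OF SJ u] lu by auto
  have u1': "u' \<in> EVs G0 R i t a (Suc J)"
    using EVs_content[OF SJ u'] lu' by auto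
  define p where "p = ends_rev G0 R i t (fst a) (rev (map (snd a) [0..<J]))"
  define f where "f = (\<lambda>x. if x = i then fst p else if x = t then snd p else New (fst a, map (snd a) [0..<J]) x)"
  have S: "EVs G0 R i t a (Suc J) = {f (tail R (snd a J)), f (head R (snd a J))}"
    unfolding EVs_Suc Let_def p_def f_def by simp
  have lf: "lvl (f x) \<le> J \<Longrightarrow> x = i \<or> x = t" for x
    by (auto simp: f_def split: if_splits)
  have nz: "\<not> ((tail R (snd a J) = i \<and> head R (snd a J) = t) \<or> (tail R (snd a J) = t \<and> head R (snd a J) = i))"
    using arcsR z by blast
  show ?thesis
  proof (cases "tail R (snd a J) = head R (snd a J)")
    case True
    then show ?thesis using u1 u1' S by auto
  next
    case False
    show ?thesis
    proof (rule ccontr)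
      assume ne: "u \<noteq> u'"
      then have "{u, u'} = {f (tail R (snd a J)), f (head R (snd a J))}"
        using u1 u1' S by auto
      then have "lvl (f (tail R (snd a J))) \<le> J" "lvl (f (head R (snd a J))) \<le> J"
        using lu lu' by (auto simp: doubleton_eq_iff)
      then have "tail R (snd a J) = i \<or> tail R (snd a J) = t" "head R (snd a J) = i \<or> head R (snd a J) = t"
        using lf by blast+
      then show False using nz False by metis
    qed
  qed
qed

lemma EVs_diff_low:
  assumes d: "\<not> (fst a = fst b \<and> (\<forall>k<j. snd a k = snd b k))" and jm: "j \<le> m"
    and ua: "u \<in> EVs G0 R i t a m" and ub: "u \<in> EVs G0 R i t b m"
  shows "lvl u \<le> j"
proof (rule ccontr)
  assume nl: "\<not> lvl u \<le> j"
  have "u \<notin> EVs G0 R i t a j" "u \<notin> EVs G0 R i t b j" using lvl_EVs[of u G0 R i t a j] lvl_EVs[of u G0 R i t b j] nl by blast+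
  then obtain ja x jb x' where A: "j \<le> ja" "u = New (fst a, map (snd a) [0..<ja]) x"
      and B: "u = New (fst b, map (snd b) [0..<jb]) x'"
    using EVs_content[OF jm ua] EVs_content[OF jm ub] by blast
  from New_eq_pre[of "fst a" "snd a" ja x "fst b" "snd b" jb x'] A B
  have "fst a = fst b" "\<forall>k<ja. snd a k = snd b k" by auto
  then show False using d A(1) by auto
qed

lemma pair_diff_index:
  assumes "a \<noteq> (b :: 'e \<times> (nat \<Rightarrow> 'f))"
  shows "\<exists>j. \<not> (fst a = fst b \<and> (\<forall>k<j. snd a k = snd b k))"
proof (cases "fst a = fst b")
  case True
  then have "snd a \<noteq> snd b" using assms by (metis prod.expand)
  then obtain k where "snd a k \<noteq> snd b k" by blast
  then show ?thesis by (rule_tac x="Suc k" in exI) auto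
next
  case False
  then show ?thesis by blast
qed

lemma EVs_trans:
  assumes arcsR: "\<forall>z\<in>arcs R. \<not> ((tail R z = i \<and> head R z = t) \<or> (tail R z = t \<and> head R z = i))"
    and bR: "\<And>k. snd b k \<in> arcs R"
    and ab: "\<And>n. EVs G0 R i t a n \<inter> EVs G0 R i t b n \<noteq> {}"
    and bc: "\<And>n. EVs G0 R i t b n \<inter> EVs G0 R i t c n \<noteq> {}"
  shows "EVs G0 R i t a n \<inter> EVs G0 R i t c n \<noteq> {}"
proof (cases "a = b \<or> b = c")
  case True
  then show ?thesis using ab bc by blast
next
  case False
  then obtain j1 j2 where j1: "\<not> (fst a = fst b \<and> (\<forall>k<j1. snd a k = snd b k))"
     and j2: "\<not> (fst b = fst c \<and> (\<forall>k<j2. snd b k = snd c k))"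
    using pair_diff_index by metis
  define J where "J = max j1 j2"
  define m where "m = max n (Suc J)"
  obtain u where u: "u \<in> EVs G0 R i t a m" "u \<in> EVs G0 R i t b m" using ab[of m] by blast
  obtain u' where u': "u' \<in> EVs G0 R i t b m" "u' \<in> EVs G0 R i t c m" using bc[of m] by blast
  have "lvl u \<le> j1" using EVs_diff_low[OF j1 _ u] by (simp add: m_def J_def)
  then have lu: "lvl u \<le> J" by (simp add: J_def)
  have "lvl u' \<le> j2" using EVs_diff_low[OF j2 _ u'] by (simp add: m_def J_def)
  then have lu': "lvl u' \<le> J" by (simp add: J_def)
  have "u = u'"
    using EVs_low_unique[OF arcsR bR _ u(2) u'(1) lu lu'] by (simp add: m_def)
  then have "EVs G0 R i t a m \<inter> EVs G0 R i t c m \<noteq> {}" using u u' by blast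
  then show ?thesis by (rule EVs_mono) (simp add: m_def)
qed



lemma topspace_symbol: "topspace (symbol_space G0 R) = arcs G0 \<times> {s. \<forall>k. s k \<in> arcs R}"
  by (auto simp: symbol_space_def topspace_product_topology PiE_iff)

definition Nset :: "('v,'e) pre_digraph \<Rightarrow> ('w,'f) pre_digraph \<Rightarrow> nat \<Rightarrow> 'e \<times> (nat \<Rightarrow> 'f) \<Rightarrow> ('e \<times> (nat \<Rightarrow> 'f)) set" where
  "Nset G0 R n b = {fst b} \<times> PiE UNIV (\<lambda>k. if k < n then {snd b k} else arcs R)"

lemma Nset_D: "c \<in> Nset G0 R n b \<Longrightarrow> fst c = fst b \<and> (\<forall>k<n. snd c k = snd b k)"
  by (auto simp: Nset_def PiE_iff mem_Times_iff) (metis singletonD)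

lemma Nset_sub: "b \<in> topspace (symbol_space G0 R) \<Longrightarrow> Nset G0 R n b \<subseteq> topspace (symbol_space G0 R)"
  unfolding topspace_symbol Nset_def
  by (auto simp: PiE_iff split: if_splits)

lemma Nset_mem: "b \<in> topspace (symbol_space G0 R) \<Longrightarrow> b \<in> Nset G0 R n b"
  unfolding topspace_symbol Nset_def
  by (cases b) (auto simp: PiE_iff)

lemma Nset_open: "b \<in> topspace (symbol_space G0 R) \<Longrightarrow> openin (symbol_space G0 R) (Nset G0 R n b)"
proof -
  assume b: "b \<in> topspace (symbol_space G0 R)"
  then have b1: "fst b \<in> arcs G0" and b2: "\<And>k. snd b k \<in> arcs R" by (auto simp: topspace_symbol)
  have fin: "finite {k \<in> UNIV. (if k < n then {snd b k} else arcs R) \<noteq> topspace (discrete_topology (arcs R))}"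
    by (rule finite_subset[of _ "{..<n}"]) auto
  have "openin (product_topology (\<lambda>_. discrete_topology (arcs R)) UNIV)
          (PiE UNIV (\<lambda>k. if k < n then {snd b k} else arcs R))"
    unfolding openin_PiE_gen using fin b2 by auto
  moreover have "openin (discrete_topology (arcs G0)) {fst b}" using b1 by simp
  ultimately show ?thesis
    unfolding symbol_space_def Nset_def openin_prod_Times_iff by blast
qed

lemma Nset_base:
  assumes W: "openin (symbol_space G0 R) W" and a: "a \<in> W"
  shows "\<exists>n. Nset G0 R n a \<subseteq> W"
proof -
  have a2: "(fst a, snd a) \<in> W" using a by simp
  have "\<exists>U V. openin (discrete_topology (arcs G0)) U \<and>
      openin (product_topology (\<lambda>_. discrete_topology (arcs R)) UNIV) V \<and>
      fst a \<in> U \<and> snd a \<in> V \<and> U \<times> V \<subseteq> W"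
    using W[unfolded symbol_space_def openin_prod_topology_alt, rule_format, OF a2] .
  then obtain U V where UV: "openin (discrete_topology (arcs G0)) U"
      "openin (product_topology (\<lambda>_. discrete_topology (arcs R)) UNIV) V"
      "fst a \<in> U" "snd a \<in> V" "U \<times> V \<subseteq> W"
    by (elim exE conjE)
  have "\<exists>Uf. finite {k \<in> UNIV. Uf k \<noteq> topspace (discrete_topology (arcs R))} \<and>
      (\<forall>k\<in>UNIV. openin (discrete_topology (arcs R)) (Uf k)) \<and> snd a \<in> PiE UNIV Uf \<and> PiE UNIV Uf \<subseteq> V"
    using UV(2)[unfolded openin_product_topology_alt, rule_format, OF UV(4)] .
  then obtain Uf where Uf: "finite {k \<in> UNIV. Uf k \<noteq> topspace (discrete_topology (arcs R))}"
      "\<forall>k\<in>UNIV. openin (discrete_topology (arcs R)) (Uf k)" "snd a \<in> PiE UNIV Uf" "PiE UNIV Uf \<subseteq> V"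
    by (elim exE conjE)
  obtain n where n: "{k \<in> UNIV. Uf k \<noteq> topspace (discrete_topology (arcs R))} \<subseteq> {..<n}"
    using finite_nat_bounded[OF Uf(1)] by blast
  have "Nset G0 R n a \<subseteq> U \<times> V"
  proof
    fix c assume c: "c \<in> Nset G0 R n a"
    then have c1: "fst c = fst a" and c2: "\<And>k. k < n \<Longrightarrow> snd c k = snd a k" using Nset_D by blast+
    have call: "\<forall>i. snd c i \<in> (if i < n then {snd a i} else arcs R)"
      using c unfolding Nset_def by (auto simp: PiE_iff mem_Times_iff)
    have c3: "snd c k \<in> arcs R" if "\<not> k < n" for k
    proof -
      have "snd c k \<in> (if k < n then {snd a k} else arcs R)" using call by blast
      then show ?thesis using that by simp
    qed
    have "snd c \<in> PiE UNIV Uf"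
    proof -
      have "snd c k \<in> Uf k" for k
      proof (cases "k < n")
        case True
        then show ?thesis using c2 Uf(3) by (auto simp: PiE_iff)
      next
        case False
        then have "Uf k = arcs R" using n by auto
        then show ?thesis using c3 False by simp
      qed
      then show ?thesis by (auto simp: PiE_iff)
    qed
    then show "c \<in> U \<times> V" using c1 UV(3) Uf(4) by (auto simp: mem_Times_iff)
  qed
  then show ?thesis using UV(5) by blast
qed

lemma Nset_countable:
  fixes G0 :: "('v,'e) pre_digraph" and R :: "('w,'f) pre_digraph"
  assumes "finite (arcs G0)" "finite (arcs R)"
  shows "countable {Nset G0 R n b | n b. b \<in> topspace (symbol_space G0 R)}"
proof -
  define M :: "nat \<Rightarrow> 'e \<times> 'f list \<Rightarrow> ('e \<times> (nat \<Rightarrow> 'f)) set" where "M = (\<lambda>n (e, ws). {e} \<times> PiE UNIV (\<lambda>k. if k < n then {ws ! k} else arcs R))"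
  have fin: "finite (Nset G0 R n ` topspace (symbol_space G0 R))" for n
  proof (rule finite_subset)
    show "Nset G0 R n ` topspace (symbol_space G0 R) \<subseteq>
           M n ` (arcs G0 \<times> {ws. set ws \<subseteq> arcs R \<and> length ws = n})"
    proof
      fix S assume "S \<in> Nset G0 R n ` topspace (symbol_space G0 R)"
      then obtain b where b: "b \<in> topspace (symbol_space G0 R)" "S = Nset G0 R n b" by blast
      have fam: "(\<lambda>k. if k < n then {snd b k} else arcs R) = (\<lambda>k. if k < n then {map (snd b) [0..<n] ! k} else arcs R)"
        by (auto intro!: ext)
      have "S = M n (fst b, map (snd b) [0..<n])"
        unfolding b(2) Nset_def M_def using fam by simp
      moreover have "(fst b, map (snd b) [0..<n]) \<in> arcs G0 \<times> {ws. set ws \<subseteq> arcs R \<and> length ws = n}"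
        using b(1) by (auto simp: topspace_symbol)
      ultimately show "S \<in> M n ` (arcs G0 \<times> {ws. set ws \<subseteq> arcs R \<and> length ws = n})" by blast
    qed
    show "finite (M n ` (arcs G0 \<times> {ws. set ws \<subseteq> arcs R \<and> length ws = n}))"
      using assms by (intro finite_imageI finite_cartesian_product finite_lists_length_eq)
  qed
  have "{Nset G0 R n b | n b. b \<in> topspace (symbol_space G0 R)} = (\<Union>n. Nset G0 R n ` topspace (symbol_space G0 R))"
    by blast
  moreover have "countable (\<Union>n. Nset G0 R n ` topspace (symbol_space G0 R))"
    using fin by (intro countable_UN) (auto intro: countable_finite)
  ultimately show ?thesis by simp
qed

lemma ev_ne: "edge_vertices G0 R i t e ws \<noteq> {}"
  by (simp add: edge_vertices_def Let_def)

lemma rel_iff: "(a, b) \<in> gluing_rel G0 R i t \<longleftrightarrow>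
   a \<in> topspace (symbol_space G0 R) \<and> b \<in> topspace (symbol_space G0 R) \<and>
   (\<forall>n. EVs G0 R i t a n \<inter> EVs G0 R i t b n \<noteq> {})"
  by (simp add: gluing_rel_def EVs_def)

lemma rel_closed: "closedin (prod_topology (symbol_space G0 R) (symbol_space G0 R)) (gluing_rel G0 R i t)"
  unfolding closedin_def
proof
  show "gluing_rel G0 R i t \<subseteq> topspace (prod_topology (symbol_space G0 R) (symbol_space G0 R))"
    by (auto simp: gluing_rel_def)
  show "openin (prod_topology (symbol_space G0 R) (symbol_space G0 R))
     (topspace (prod_topology (symbol_space G0 R) (symbol_space G0 R)) - gluing_rel G0 R i t)"
    unfolding openin_subopen[of _ "_ - _"]
  proof
    fix x assume x: "x \<in> topspace (prod_topology (symbol_space G0 R) (symbol_space G0 R)) - gluing_rel G0 R i t"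
    obtain a b where ab: "x = (a, b)" by (cases x)
    have a: "a \<in> topspace (symbol_space G0 R)" and b: "b \<in> topspace (symbol_space G0 R)"
      using x ab by auto
    have "(a, b) \<notin> gluing_rel G0 R i t" using x ab by simp
    then have "\<not> (\<forall>n. EVs G0 R i t a n \<inter> EVs G0 R i t b n \<noteq> {})" using a b by (simp add: rel_iff)
    then obtain n where n: "EVs G0 R i t a n \<inter> EVs G0 R i t b n = {}" by blast
    define T where "T = Nset G0 R n a \<times> Nset G0 R n b"
    have "openin (prod_topology (symbol_space G0 R) (symbol_space G0 R)) T"
      unfolding T_def openin_prod_Times_iff using Nset_open a b by blast
    moreover have "x \<in> T" using ab Nset_mem[OF a] Nset_mem[OF b] by (simp add: T_def)
    moreover have "T \<subseteq> topspace (prod_topology (symbol_space G0 R) (symbol_space G0 R)) - gluing_rel G0 R i t"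
    proof
      fix y assume y: "y \<in> T"
      obtain a' b' where ab': "y = (a', b')" by (cases y)
      have a': "a' \<in> Nset G0 R n a" and b': "b' \<in> Nset G0 R n b" using y ab' by (auto simp: T_def)
      have "EVs G0 R i t a' n = EVs G0 R i t a n"
        using Nset_D[OF a'] by (intro EVs_cong) auto
      moreover have "EVs G0 R i t b' n = EVs G0 R i t b n"
        using Nset_D[OF b'] by (intro EVs_cong) auto
      ultimately have "EVs G0 R i t a' n \<inter> EVs G0 R i t b' n = {}" using n by simp
      then have "(a', b') \<notin> gluing_rel G0 R i t" unfolding rel_iff by blast
      moreover have "a' \<in> topspace (symbol_space G0 R)" "b' \<in> topspace (symbol_space G0 R)"
        using Nset_sub a b a' b' by blast+
      ultimately show "y \<in> topspace (prod_topology (symbol_space G0 R) (symbol_space G0 R)) - gluing_rel G0 R i t"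
        using ab' by simp
    qed
    ultimately show "\<exists>T. openin (prod_topology (symbol_space G0 R) (symbol_space G0 R)) T \<and> x \<in> T \<and>
          T \<subseteq> topspace (prod_topology (symbol_space G0 R) (symbol_space G0 R)) - gluing_rel G0 R i t"
      by blast
  qed
qed

lemma rel_equiv:
  assumes arcsR: "\<forall>z\<in>arcs R. \<not> ((tail R z = i \<and> head R z = t) \<or> (tail R z = t \<and> head R z = i))"
  shows "equiv (topspace (symbol_space G0 R)) (gluing_rel G0 R i t)"
  unfolding equiv_def
proof (intro conjI)
  show "gluing_rel G0 R i t \<subseteq> topspace (symbol_space G0 R) \<times> topspace (symbol_space G0 R)"
  proof
    fix x assume "x \<in> gluing_rel G0 R i t"
    then show "x \<in> topspace (symbol_space G0 R) \<times> topspace (symbol_space G0 R)"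
      by (cases x) (simp add: rel_iff)
  qed
  have "(x, x) \<in> gluing_rel G0 R i t" if "x \<in> topspace (symbol_space G0 R)" for x
    using that by (simp add: gluing_rel_def ev_ne)
  then show "refl_on (topspace (symbol_space G0 R)) (gluing_rel G0 R i t)"
    unfolding refl_on_def by blast
  show "sym (gluing_rel G0 R i t)"
    unfolding sym_def using rel_iff by (metis inf_commute)
  show "trans (gluing_rel G0 R i t)"
    unfolding trans_def
  proof (intro allI impI)
    fix a b c assume ab: "(a, b) \<in> gluing_rel G0 R i t" and bc: "(b, c) \<in> gluing_rel G0 R i t"
    have bR: "\<And>k. snd b k \<in> arcs R" using ab by (auto simp: rel_iff topspace_symbol)
    have "EVs G0 R i t a n \<inter> EVs G0 R i t c n \<noteq> {}" for n
      using EVs_trans[OF arcsR bR, of G0 a c n] ab bc by (simp add: rel_iff)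
    then show "(a, c) \<in> gluing_rel G0 R i t" using ab bc by (simp add: rel_iff)
  qed
qed

theorem theorem1p24:
  fixes G0 :: "('v,'e) pre_digraph" and R :: "('w,'f) pre_digraph" and i t :: 'w
  assumes "expanding G0 R i t"
  shows "compact_space (limit_space G0 R i t) \<and> metrizable_space (limit_space G0 R i t)"
proof -
  have fG0: "finite (arcs G0)" and fR: "finite (arcs R)"
    and arcsR: "\<forall>z\<in>arcs R. \<not> ((tail R z = i \<and> head R z = t) \<or> (tail R z = t \<and> head R z = i))"
    using assms fin_digraph.finite_arcs unfolding expanding_def replacement_system_def by blast+
  have cX: "compact_space (symbol_space G0 R)"
    unfolding symbol_space_def
    using fG0 fR by (simp add: compact_space_prod_topology compact_space_product_topology compact_space_discrete_topology)
  have hX: "Hausdorff_space (symbol_space G0 R)"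
    unfolding symbol_space_def
    by (simp add: Hausdorff_space_prod_topology Hausdorff_space_product_topology)
  show ?thesis
    unfolding limit_space_def
  proof (rule quotient_compact_metrizable[OF cX hX Nset_countable[OF fG0 fR]])
    show "\<And>V. V \<in> {Nset G0 R n b | n b. b \<in> topspace (symbol_space G0 R)} \<Longrightarrow> openin (symbol_space G0 R) V"
      using Nset_open by auto
    show "\<And>W x. openin (symbol_space G0 R) W \<Longrightarrow> x \<in> W \<Longrightarrow>
          \<exists>V\<in>{Nset G0 R n b | n b. b \<in> topspace (symbol_space G0 R)}. x \<in> V \<and> V \<subseteq> W"
    proof -
      fix W x assume W: "openin (symbol_space G0 R) W" and x: "x \<in> W"
      obtain n where n: "Nset G0 R n x \<subseteq> W" using Nset_base[OF W x] by blast
      have xT: "x \<in> topspace (symbol_space G0 R)" using openin_subset[OF W] x by blast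
      have m: "Nset G0 R n x \<in> {Nset G0 R n b | n b. b \<in> topspace (symbol_space G0 R)}"
        using xT by blast
      have "x \<in> Nset G0 R n x" by (rule Nset_mem[OF xT])
      then show "\<exists>V\<in>{Nset G0 R n b | n b. b \<in> topspace (symbol_space G0 R)}. x \<in> V \<and> V \<subseteq> W"
        using m n by (intro bexI[of _ "Nset G0 R n x"]) auto
    qed
    show "equiv (topspace (symbol_space G0 R)) (gluing_rel G0 R i t)" by (rule rel_equiv[OF arcsR])
    show "closedin (prod_topology (symbol_space G0 R) (symbol_space G0 R)) (gluing_rel G0 R i t)"
      by (rule rel_closed)
  qed
qed

end
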